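(* If $\mathcal{F}$ is a finitary argumentation framework, then there exists a well-ordering $<$ of $A_{\mathcal{F}}$ such that each argument $a$ attacks only finitely many arguments $b$ with $b<a$.
   Context: An argumentation framework is a pair $\mathcal{F}=(A_{\mathcal{F}},R_{\mathcal{F}})$ with $R_{\mathcal{F}}\subseteq A_{\mathcal{F}}\times A_{\mathcal{F}}$; $a$ attacks $b$ means $(a,b)\in R_{\mathcal{F}}$. $\mathcal{F}$ is finitary if every argument is attacked by only finitely many arguments. *)

theory Defs
  imports Main
begin

text \<open>An argumentation framework is a pair (A, R) with R a subset of A x A;
  a attacks b iff (a, b) is in R.\<close>
definition argumentation_framework :: "'a set \<Rightarrow> ('a \<times> 'a) set \<Rightarrow> bool" where
  "argumentation_framework A R \<longleftrightarrow> R \<subseteq> A \<times> A"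

definition finitary :: "'a set \<Rightarrow> ('a \<times> 'a) set \<Rightarrow> bool" where
  "finitary A R \<longleftrightarrow> (\<forall>b\<in>A. finite {a. (a, b) \<in> R})"

end

theory Submission
  imports Defs "HOL-Library.Countable_Set"
begin

lemma levels_finite:
  fixes R :: "('b \<times> 'b) set"
  assumes P: "\<And>y. finite {x. (x, y) \<in> R}"
  shows "finite {x. (x, c) \<in> R ^^ n}"
proof (induction n arbitrary: c)
  case 0
  have "{x. (x, c) \<in> R ^^ 0} = {c}" by auto
  then show ?case by simp
next
  case (Suc n)
  have "{x. (x, c) \<in> R ^^ Suc n} \<subseteq> (\<Union>y\<in>{y. (y, c) \<in> R ^^ n}. {x. (x, y) \<in> R})"
    apply (rule subsetI) apply (drule CollectD) apply (drule relpow_Suc_D2) by blast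
  moreover have "finite (\<Union>y\<in>{y. (y, c) \<in> R ^^ n}. {x. (x, y) \<in> R})"
    using Suc P by blast
  ultimately show ?case by (rule finite_subset)
qed

lemma anc_countable:
  assumes P: "\<And>y. finite {x. (x, y) \<in> R}"
  shows "countable {x. (x, c) \<in> R\<^sup>*}"
proof -
  have "{x. (x, c) \<in> R\<^sup>*} = (\<Union>n. {x. (x, c) \<in> R ^^ n})"
    by (auto simp: rtrancl_power)
  moreover have "countable (\<Union>n. {x. (x, c) \<in> R ^^ n})"
    using levels_finite[OF P] by (intro countable_UN) (auto intro: countable_finite)
  ultimately show ?thesis by simp
qed

theorem lemma1:
  fixes A :: "'a set" and R :: "('a \<times> 'a) set"
  assumes "argumentation_framework A R"
    and "finitary A R"
  shows "\<exists>r. well_order_on A r \<and>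
           (\<forall>a\<in>A. finite {b \<in> A. (b, a) \<in> r \<and> b \<noteq> a \<and> (a, b) \<in> R})"
proof -
  have P: "finite {x. (x, y) \<in> R}" for y
  proof (cases "y \<in> A")
    case True then show ?thesis using assms(2) unfolding finitary_def by blast
  next
    case False
    then have "{x. (x, y) \<in> R} = {}" using assms(1) unfolding argumentation_framework_def by blast
    then show ?thesis by simp
  qed
  obtain W :: "'a rel" where W: "well_order W"
    using well_ordering by metis
  have Wrefl: "(x, x) \<in> W" for x using W
    unfolding well_order_on_def linear_order_on_def partial_order_on_def preorder_on_def refl_on_def by blast
  have Wtrans: "trans W" using W
    unfolding well_order_on_def linear_order_on_def partial_order_on_def preorder_on_def by blast
  have Wanti: "antisym W" using W
    unfolding well_order_on_def linear_order_on_def partial_order_on_def by blast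
  have Wtot: "x \<noteq> y \<Longrightarrow> (x, y) \<in> W \<or> (y, x) \<in> W" for x y using W
    unfolding well_order_on_def linear_order_on_def total_on_def by blast
  have Wt: "(x, y) \<in> W \<Longrightarrow> (y, z) \<in> W \<Longrightarrow> (x, z) \<in> W" for x y z
    using Wtrans by (meson transD)
  have Wa: "(x, y) \<in> W \<Longrightarrow> (y, x) \<in> W \<Longrightarrow> x = y" for x y
    using Wanti by (meson antisymD)
  have Wwf: "wf (W - Id)" using W unfolding well_order_on_def by blast
  define anc where "anc c = {x. (x, c) \<in> R\<^sup>*}" for c
  have ancc: "countable (anc c)" for c unfolding anc_def by (rule anc_countable[OF P])
  have keyex: "\<exists>c. (a, c) \<in> R\<^sup>* \<and> (\<forall>d. (a, d) \<in> R\<^sup>* \<longrightarrow> (c, d) \<in> W)" for a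
  proof -
    have "a \<in> {d. (a, d) \<in> R\<^sup>*}" by simp
    then obtain m where m: "m \<in> {d. (a, d) \<in> R\<^sup>*}"
      and mmin: "\<forall>y. (y, m) \<in> W - Id \<longrightarrow> y \<notin> {d. (a, d) \<in> R\<^sup>*}"
      using Wwf unfolding wf_eq_minimal by metis
    have "(m, d) \<in> W" if "(a, d) \<in> R\<^sup>*" for d
      using Wrefl Wtot[of m d] mmin that by blast
    then show ?thesis using m by blast
  qed
  define key where "key a = (SOME c. (a, c) \<in> R\<^sup>* \<and> (\<forall>d. (a, d) \<in> R\<^sup>* \<longrightarrow> (c, d) \<in> W))" for a
  have key1: "(a, key a) \<in> R\<^sup>*" and key2: "(a, d) \<in> R\<^sup>* \<Longrightarrow> (key a, d) \<in> W" for a d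
    using someI_ex[OF keyex[of a]] unfolding key_def by blast+
  have keyR: "(a, b) \<in> R \<Longrightarrow> (key a, key b) \<in> W" for a b
    using key1[of b] key2[of a "key b"] by (meson converse_rtrancl_into_rtrancl)
  define g where "g a = to_nat_on (anc (key a)) a" for a
  have inkey: "a \<in> anc (key a)" for a using key1 unfolding anc_def by simp
  have finj: "a = b" if "key a = key b" "g a = g b" for a b
  proof -
    have "inj_on (to_nat_on (anc (key a))) (anc (key a))" using ancc by (rule inj_on_to_nat_on)
    then show ?thesis using that inkey[of a] inkey[of b] unfolding g_def by (metis inj_on_def)
  qed
  define r where "r = {(a, b). a \<in> A \<and> b \<in> A \<and>
      ((key a, key b) \<in> W - Id \<or> (key a = key b \<and> g a \<le> g b))}"
  have wo: "well_order_on A r"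
    unfolding well_order_on_def linear_order_on_def partial_order_on_def preorder_on_def
  proof (intro conjI)
    show "r \<subseteq> A \<times> A" unfolding r_def by auto
    show "refl_on A r" unfolding refl_on_def r_def by auto
    show "trans r"
    proof (rule transI)
      fix a b c assume "(a, b) \<in> r" "(b, c) \<in> r"
      then have A: "a \<in> A" "b \<in> A" "c \<in> A"
        and h1: "((key a, key b) \<in> W \<and> key a \<noteq> key b) \<or> (key a = key b \<and> g a \<le> g b)"
        and h2: "((key b, key c) \<in> W \<and> key b \<noteq> key c) \<or> (key b = key c \<and> g b \<le> g c)"
        unfolding r_def by auto
      have "((key a, key c) \<in> W \<and> key a \<noteq> key c) \<or> (key a = key c \<and> g a \<le> g c)"
        using h1 h2
      proof (elim disjE conjE)
        assume "(key a, key b) \<in> W" "key a \<noteq> key b" "(key b, key c) \<in> W" "key b \<noteq> key c"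
        then show ?thesis using Wt[of "key a" "key b" "key c"] Wa[of "key b" "key c"] Wt[of "key b" "key c" "key a"] by metis
      qed auto
      then show "(a, c) \<in> r" using A unfolding r_def by auto
    qed
    show "antisym r"
    proof (rule antisymI)
      fix a b assume "(a, b) \<in> r" "(b, a) \<in> r"
      then have
            h1: "((key a, key b) \<in> W \<and> key a \<noteq> key b) \<or> (key a = key b \<and> g a \<le> g b)"
        and h2: "((key b, key a) \<in> W \<and> key b \<noteq> key a) \<or> (key b = key a \<and> g b \<le> g a)"
        unfolding r_def by auto
      have k: "key a = key b"
      proof (rule ccontr)
        assume ne: "key a \<noteq> key b"
        then have "(key a, key b) \<in> W" using h1 by simp
        moreover have "(key b, key a) \<in> W" using h2 ne by simp
        ultimately show False using Wa ne by blast
      qed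
      then have "g a \<le> g b" "g b \<le> g a" using h1 h2 by simp_all
      then have "key a = key b \<and> g a = g b" using k by simp
      then show "a = b" using finj by blast
    qed
    show "total_on A r"
    proof (rule total_onI)
      fix a b assume "a \<in> A" "b \<in> A" "a \<noteq> b"
      note ab = this
      show "(a, b) \<in> r \<or> (b, a) \<in> r"
      proof (cases "key a = key b")
        case True
        then have "g a \<noteq> g b" using finj ab(3) by blast
        then have "g a \<le> g b \<or> g b \<le> g a" by linarith
        then show ?thesis using True ab unfolding r_def by auto
      next
        case False
        then have "(key a, key b) \<in> W \<or> (key b, key a) \<in> W" using Wtot by blast
        then show ?thesis using False ab unfolding r_def by auto
      qed
    qed
    have "r - Id \<subseteq> inv_image ((W - Id) <*lex*> less_than) (\<lambda>a. (key a, g a))"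
      unfolding r_def using finj by (auto simp: le_neq_implies_less)
    then show "wf (r - Id)"
      by (rule wf_subset[rotated]) (intro wf_inv_image wf_lex_prod Wwf wf_less_than)
  qed
  have fin: "finite {b \<in> A. (b, a) \<in> r \<and> b \<noteq> a \<and> (a, b) \<in> R}" if "a \<in> A" for a
  proof -
    let ?S = "anc (key a)"
    have sub: "{b \<in> A. (b, a) \<in> r \<and> b \<noteq> a \<and> (a, b) \<in> R} \<subseteq>
        {b \<in> ?S. to_nat_on ?S b \<le> to_nat_on ?S a}"
    proof
      fix b assume b: "b \<in> {b \<in> A. (b, a) \<in> r \<and> b \<noteq> a \<and> (a, b) \<in> R}"
      then have "(key a, key b) \<in> W" using keyR by blast
      moreover have "(key b, key a) \<in> W - Id \<or> (key b = key a \<and> g b \<le> g a)"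
        using b unfolding r_def by blast
      ultimately have "key b = key a \<and> g b \<le> g a" using Wanti unfolding antisym_def by blast
      then show "b \<in> {b \<in> ?S. to_nat_on ?S b \<le> to_nat_on ?S a}"
        using inkey[of b] unfolding g_def by auto
    qed
    have "finite {b \<in> ?S. to_nat_on ?S b \<le> to_nat_on ?S a}"
    proof (rule finite_imageD)
      show "finite (to_nat_on ?S ` {b \<in> ?S. to_nat_on ?S b \<le> to_nat_on ?S a})"
        by (rule finite_subset[of _ "{..to_nat_on ?S a}"]) auto
      show "inj_on (to_nat_on ?S) {b \<in> ?S. to_nat_on ?S b \<le> to_nat_on ?S a}"
        using inj_on_to_nat_on[OF ancc] by (rule inj_on_subset) auto
    qed
    then show ?thesis using sub by (rule finite_subset[rotated])
  qed
  show ?thesis using wo fin by blast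
qed

end
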